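(* Let $R\colon \mathbf{EA}\to[\mathbf{FinBool}^{op},\mathbf{Set}]$ and $L\colon[\mathbf{FinBool}^{op},\mathbf{Set}]\to\mathbf{EA}$ be the functors defined below, with $L$ left adjoint to $R$. The adjunction $L\dashv R$ is a reflection. More precisely, for every effect algebra $A$, the cocone under the diagram $D_A\colon \int R(A)\to\mathbf{EA}$ whose component at an object $(2^{[n]},g)$ is the morphism $g\colon 2^{[n]}\to A$ itself is a colimiting cocone. Consequently $L(R(A))\cong A$, naturally in $A$, i.e. the counit of the adjunction is an isomorphism.
   Context: An effect algebra is a partial algebra $(A;+,0,1)$, with a binary partial operation $+$ and constants $0,1$, satisfying: (E1) if $a+b$ is defined, then $b+a$ is defined and $a+b=b+a$; (E2) if $a+b$ and $(a+b)+c$ are defined, then $b+c$ and $a+(b+c)$ are defined and $(a+b)+c=a+(b+c)$; (E3) for every $a$ there is a unique $a^\perp$ such that $a+a^\perp=1$; (E4) if $a+1$ is defined, then $a=0$. One-element effect algebras (with $0=1$) are allowed. We write $a\perp b$ when $a+b$ is defined. A morphism of effect algebras $f\colon A_1\to A_2$ is a map with $f(1)=1$ such that $a\perp b$ implies $f(a)\perp f(b)$ and $f(a+b)=f(a)+f(b)$. $\mathbf{EA}$ denotes the category of effect algebras. Every Boolean algebra is an effect algebra: $x\perp y$ iff $x\wedge y=0$, and then $x+y=x\vee y$. This makes $\mathbf{Bool}$ a full subcategory of $\mathbf{EA}$. An observable is an $\mathbf{EA}$-morphism from a Boolean algebra into an effect algebra. For $n\in\mathbb N$ let $[n]=\{1,\dots,n\}$,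 with $[0]=\emptyset$. $\mathbf{FinBool}$ is the full subcategory of $\mathbf{Bool}$ on the objects $2^{[n]}$ (power-set Boolean algebras), $n\in\mathbb N$. $E\colon\mathbf{FinBool}\to\mathbf{EA}$ is the resulting fully faithful inclusion. $R(A)$ is the presheaf $R(A)(2^{[n]})=\mathbf{EA}(E(2^{[n]}),A)$, with $R(A)(f)(g)=g\circ E(f)$. For a presheaf $P$ on $\mathbf{FinBool}$, the category of elements $\int P$ has: - objects: pairs $(2^{[n]},g)$ with $g\in P(2^{[n]})$; - arrows $(2^{[n]},g)\to(2^{[n']},g')$: Boolean algebra morphisms $f\colon 2^{[n]}\to 2^{[n']}$ with $P(f)(g')=g$. For $P=R(A)$, this last condition reads $g'\circ f=g$. $\pi_P\colon\int P\to\mathbf{FinBool}$ is the projection. $L(P)=\varinjlim(E\circ\pi_P)$. $D_A$ denotes $E\circ\pi_{R(A)}\colon\int R(A)\to\mathbf{EA}$. *)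

theory Defs
  imports Main
begin

record 'a eff_alg =
  ea_carrier :: "'a set"
  ea_psum :: "'a \<Rightarrow> 'a \<Rightarrow> 'a option"
  ea_zero :: 'a
  ea_one :: 'a

definition ea_perp :: "'a eff_alg \<Rightarrow> 'a \<Rightarrow> 'a \<Rightarrow> bool" where
  "ea_perp A a b \<longleftrightarrow> ea_psum A a b \<noteq> None"

definition ea_plus :: "'a eff_alg \<Rightarrow> 'a \<Rightarrow> 'a \<Rightarrow> 'a" where
  "ea_plus A a b = the (ea_psum A a b)"

definition effect_algebra :: "'a eff_alg \<Rightarrow> bool" where
  "effect_algebra A \<longleftrightarrow>
     ea_zero A \<in> ea_carrier A \<and> ea_one A \<in> ea_carrier A \<and>
     (\<forall>a\<in>ea_carrier A. \<forall>b\<in>ea_carrier A.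
        ea_perp A a b \<longrightarrow> ea_plus A a b \<in> ea_carrier A) \<and>
     \<comment> \<open>(E1)\<close>
     (\<forall>a\<in>ea_carrier A. \<forall>b\<in>ea_carrier A.
        ea_perp A a b \<longrightarrow> ea_perp A b a \<and> ea_plus A a b = ea_plus A b a) \<and>
     \<comment> \<open>(E2)\<close>
     (\<forall>a\<in>ea_carrier A. \<forall>b\<in>ea_carrier A. \<forall>c\<in>ea_carrier A.
        ea_perp A a b \<and> ea_perp A (ea_plus A a b) c \<longrightarrow>
          ea_perp A b c \<and> ea_perp A a (ea_plus A b c) \<and>
          ea_plus A (ea_plus A a b) c = ea_plus A a (ea_plus A b c)) \<and>
     \<comment> \<open>(E3)\<close>
     (\<forall>a\<in>ea_carrier A. \<exists>!b. b \<in> ea_carrier A \<and> ea_perp A a b \<and> ea_plus A a b = ea_one A) \<and>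
     \<comment> \<open>(E4)\<close>
     (\<forall>a\<in>ea_carrier A. ea_perp A a (ea_one A) \<longrightarrow> a = ea_zero A)"

definition ea_hom :: "'a eff_alg \<Rightarrow> 'b eff_alg \<Rightarrow> ('a \<Rightarrow> 'b) \<Rightarrow> bool" where
  "ea_hom A B f \<longleftrightarrow>
     (\<forall>a\<in>ea_carrier A. f a \<in> ea_carrier B) \<and>
     f (ea_one A) = ea_one B \<and>
     (\<forall>a\<in>ea_carrier A. \<forall>b\<in>ea_carrier A. ea_perp A a b \<longrightarrow>
        ea_perp B (f a) (f b) \<and> f (ea_plus A a b) = ea_plus B (f a) (f b))"

text \<open>The power-set Boolean algebra of [n] = {1..n}, viewed as an effect algebra.\<close>

definition bool_ea :: "nat \<Rightarrow> nat set eff_alg" where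
  "bool_ea n = \<lparr> ea_carrier = Pow {1..n},
                 ea_psum = (\<lambda>x y. if x \<inter> y = {} then Some (x \<union> y) else None),
                 ea_zero = {}, ea_one = {1..n} \<rparr>"

definition bool_hom :: "nat \<Rightarrow> nat \<Rightarrow> (nat set \<Rightarrow> nat set) \<Rightarrow> bool" where
  "bool_hom n m f \<longleftrightarrow>
     (\<forall>x\<in>Pow {1..n}. f x \<in> Pow {1..m}) \<and>
     f {} = {} \<and> f {1..n} = {1..m} \<and>
     (\<forall>x\<in>Pow {1..n}. \<forall>y\<in>Pow {1..n}. f (x \<union> y) = f x \<union> f y \<and> f (x \<inter> y) = f x \<inter> f y) \<and>
     (\<forall>x\<in>Pow {1..n}. f ({1..n} - x) = {1..m} - f x)"

text \<open>Objects (2^[n], g) of the category of elements of R(A).\<close>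

definition elem_obj :: "'a eff_alg \<Rightarrow> nat \<Rightarrow> (nat set \<Rightarrow> 'a) \<Rightarrow> bool" where
  "elem_obj A n g \<longleftrightarrow> ea_hom (bool_ea n) A g"

definition elem_arr :: "'a eff_alg \<Rightarrow> nat \<Rightarrow> (nat set \<Rightarrow> 'a) \<Rightarrow> nat \<Rightarrow> (nat set \<Rightarrow> 'a)
                        \<Rightarrow> (nat set \<Rightarrow> nat set) \<Rightarrow> bool" where
  "elem_arr A n g n' g' f \<longleftrightarrow>
     elem_obj A n g \<and> elem_obj A n' g' \<and> bool_hom n n' f \<and>
     (\<forall>x\<in>Pow {1..n}. g' (f x) = g x)"

text \<open>A cocone under D_A with apex B: components h n g : 2^[n] -> B, compatible with arrows.\<close>

definition cocone_DA :: "'a eff_alg \<Rightarrow> 'b eff_alg \<Rightarrow> (nat \<Rightarrow> (nat set \<Rightarrow> 'a) \<Rightarrow> nat set \<Rightarrow> 'b) \<Rightarrow> bool" where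
  "cocone_DA A B h \<longleftrightarrow>
     (\<forall>n g. elem_obj A n g \<longrightarrow> ea_hom (bool_ea n) B (h n g)) \<and>
     (\<forall>n g n' g' f. elem_arr A n g n' g' f \<longrightarrow>
        (\<forall>x\<in>Pow {1..n}. h n' g' (f x) = h n g x))"

definition mediates :: "'a eff_alg \<Rightarrow> (nat \<Rightarrow> (nat set \<Rightarrow> 'a) \<Rightarrow> nat set \<Rightarrow> 'c)
                        \<Rightarrow> (nat \<Rightarrow> (nat set \<Rightarrow> 'a) \<Rightarrow> nat set \<Rightarrow> 'b) \<Rightarrow> ('c \<Rightarrow> 'b) \<Rightarrow> bool" where
  "mediates A k h u \<longleftrightarrow>
     (\<forall>n g. elem_obj A n g \<longrightarrow> (\<forall>x\<in>Pow {1..n}. u (k n g x) = h n g x))"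

text \<open>The cocone k with apex C under D_A is colimiting in EA, tested against apexes of type 'b:
  every cocone factors through it by a unique EA-morphism (uniqueness on the carrier of C).\<close>

definition colimiting_DA :: "'a eff_alg \<Rightarrow> 'c eff_alg \<Rightarrow> (nat \<Rightarrow> (nat set \<Rightarrow> 'a) \<Rightarrow> nat set \<Rightarrow> 'c)
                             \<Rightarrow> 'b itself \<Rightarrow> bool" where
  "colimiting_DA A C k (_ :: 'b itself) \<longleftrightarrow>
     cocone_DA A C k \<and>
     (\<forall>(B :: 'b eff_alg) h. effect_algebra B \<and> cocone_DA A B h \<longrightarrow>
        (\<exists>u. ea_hom C B u \<and> mediates A k h u \<and>
             (\<forall>v. ea_hom C B v \<and> mediates A k h v \<longrightarrow> (\<forall>c\<in>ea_carrier C. v c = u c))))"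

end

theory Submission
  imports Defs
begin

context
  fixes A :: "'a eff_alg"
  assumes EA: "effect_algebra A"
begin

lemmas EAu = EA[unfolded effect_algebra_def]

lemma ea_zero_in: "ea_zero A \<in> ea_carrier A" and ea_one_in: "ea_one A \<in> ea_carrier A"
  using EAu by simp_all

lemma ea_closed: "a \<in> ea_carrier A \<Longrightarrow> b \<in> ea_carrier A \<Longrightarrow> ea_perp A a b \<Longrightarrow> ea_plus A a b \<in> ea_carrier A"
  using EAu[THEN conjunct2, THEN conjunct2, THEN conjunct1] by blast

lemma ea_comm: "a \<in> ea_carrier A \<Longrightarrow> b \<in> ea_carrier A \<Longrightarrow> ea_perp A a b \<Longrightarrow> ea_perp A b a \<and> ea_plus A a b = ea_plus A b a"
  using EAu[THEN conjunct2, THEN conjunct2, THEN conjunct2, THEN conjunct1] by blast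

lemma ea_assoc: "a \<in> ea_carrier A \<Longrightarrow> b \<in> ea_carrier A \<Longrightarrow> c \<in> ea_carrier A \<Longrightarrow>
  ea_perp A a b \<Longrightarrow> ea_perp A (ea_plus A a b) c \<Longrightarrow>
  ea_perp A b c \<and> ea_perp A a (ea_plus A b c) \<and> ea_plus A (ea_plus A a b) c = ea_plus A a (ea_plus A b c)"
  using EAu[THEN conjunct2, THEN conjunct2, THEN conjunct2, THEN conjunct2, THEN conjunct1] by blast

lemma ea_E3: "a \<in> ea_carrier A \<Longrightarrow> \<exists>!b. b \<in> ea_carrier A \<and> ea_perp A a b \<and> ea_plus A a b = ea_one A"
  using EAu[THEN conjunct2, THEN conjunct2, THEN conjunct2, THEN conjunct2, THEN conjunct2, THEN conjunct1] by blast

lemma ea_E4: "a \<in> ea_carrier A \<Longrightarrow> ea_perp A a (ea_one A) \<Longrightarrow> a = ea_zero A"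
  using EAu[THEN conjunct2, THEN conjunct2, THEN conjunct2, THEN conjunct2, THEN conjunct2, THEN conjunct2] by blast


definition cp :: "'a \<Rightarrow> 'a" where
  "cp a = (THE b. b \<in> ea_carrier A \<and> ea_perp A a b \<and> ea_plus A a b = ea_one A)"

lemma cp_props: "a \<in> ea_carrier A \<Longrightarrow> cp a \<in> ea_carrier A \<and> ea_perp A a (cp a) \<and> ea_plus A a (cp a) = ea_one A"
  unfolding cp_def by (rule theI'[OF ea_E3])

lemma cp_unique: "a \<in> ea_carrier A \<Longrightarrow> b \<in> ea_carrier A \<Longrightarrow> ea_perp A a b \<Longrightarrow> ea_plus A a b = ea_one A \<Longrightarrow> b = cp a"
  unfolding cp_def by (rule the1_equality[OF ea_E3, symmetric]) auto

lemma cp_one: "cp (ea_one A) = ea_zero A"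
proof -
  have c: "cp (ea_one A) \<in> ea_carrier A" "ea_perp A (ea_one A) (cp (ea_one A))"
    using cp_props[OF ea_one_in] by auto
  have "ea_perp A (cp (ea_one A)) (ea_one A)"
    using ea_comm[OF ea_one_in c(1) c(2)] by simp
  thus ?thesis using ea_E4[OF c(1)] by blast
qed

lemma cp_aux: assumes a: "a \<in> ea_carrier A"
  shows "ea_perp A (cp a) (ea_zero A) \<and> ea_plus A (cp a) (ea_zero A) = cp a"
proof -
  have p1: "ea_perp A (ea_one A) (ea_zero A)" "ea_plus A (ea_one A) (ea_zero A) = ea_one A"
    using cp_props[OF ea_one_in] cp_one by simp_all
  have c: "cp a \<in> ea_carrier A" "ea_perp A a (cp a)" "ea_plus A a (cp a) = ea_one A"
    using cp_props[OF a] by auto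
  have as: "ea_perp A (cp a) (ea_zero A) \<and> ea_perp A a (ea_plus A (cp a) (ea_zero A)) \<and>
     ea_plus A (ea_plus A a (cp a)) (ea_zero A) = ea_plus A a (ea_plus A (cp a) (ea_zero A))"
    using ea_assoc[OF a c(1) ea_zero_in c(2)] c p1 by simp
  have cl: "ea_plus A (cp a) (ea_zero A) \<in> ea_carrier A" using as ea_closed c ea_zero_in by blast
  have "ea_plus A (cp a) (ea_zero A) = cp a"
    using cp_unique[OF a cl] as c p1 by metis
  thus ?thesis using as by simp
qed

lemma cp_cp: assumes a: "a \<in> ea_carrier A" shows "cp (cp a) = a"
proof -
  have c: "cp a \<in> ea_carrier A" "ea_perp A a (cp a)" "ea_plus A a (cp a) = ea_one A"
    using cp_props[OF a] by auto
  have "ea_perp A (cp a) a" "ea_plus A (cp a) a = ea_one A" using ea_comm[OF a c(1) c(2)] c by auto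
  thus ?thesis using cp_unique[OF c(1) a] by metis
qed

lemma zero_right: assumes a: "a \<in> ea_carrier A" shows "ea_perp A a (ea_zero A) \<and> ea_plus A a (ea_zero A) = a"
  using cp_aux[OF cp_props[OF a, THEN conjunct1]] cp_cp[OF a] by simp

lemma zero_left: assumes a: "a \<in> ea_carrier A" shows "ea_perp A (ea_zero A) a \<and> ea_plus A (ea_zero A) a = a"
  using zero_right[OF a] ea_comm[OF a ea_zero_in] by simp

end
lemma bool_ea_simps[simp]:
  "ea_carrier (bool_ea n) = Pow {1..n}"
  "ea_one (bool_ea n) = {1..n}"
  "ea_zero (bool_ea n) = {}"
  "ea_perp (bool_ea n) x y \<longleftrightarrow> x \<inter> y = {}"
  "x \<inter> y = {} \<Longrightarrow> ea_plus (bool_ea n) x y = x \<union> y"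
  by (auto simp: bool_ea_def ea_perp_def ea_plus_def)

lemma hom_bool_iff:
  "ea_hom (bool_ea n) B g \<longleftrightarrow>
    (\<forall>x. x \<subseteq> {1..n} \<longrightarrow> g x \<in> ea_carrier B) \<and> g {1..n} = ea_one B \<and>
    (\<forall>x y. x \<subseteq> {1..n} \<longrightarrow> y \<subseteq> {1..n} \<longrightarrow> x \<inter> y = {} \<longrightarrow>
       ea_perp B (g x) (g y) \<and> g (x \<union> y) = ea_plus B (g x) (g y))"
  unfolding ea_hom_def by (simp add: Ball_def)

lemma hom_boolD1: "ea_hom (bool_ea n) B g \<Longrightarrow> x \<subseteq> {1..n} \<Longrightarrow> g x \<in> ea_carrier B"
  unfolding hom_bool_iff by blast
lemma hom_boolD2: "ea_hom (bool_ea n) B g \<Longrightarrow> g {1..n} = ea_one B"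
  unfolding hom_bool_iff by blast
lemma hom_boolD3: "ea_hom (bool_ea n) B g \<Longrightarrow> x \<subseteq> {1..n} \<Longrightarrow> y \<subseteq> {1..n} \<Longrightarrow> x \<inter> y = {} \<Longrightarrow>
   ea_perp B (g x) (g y) \<and> g (x \<union> y) = ea_plus B (g x) (g y)"
  unfolding hom_bool_iff by blast

context
  fixes A :: "'a eff_alg"
  assumes EA: "effect_algebra A"
begin

lemma hom_empty: assumes h: "ea_hom (bool_ea n) A g" shows "g {} = ea_zero A"
proof -
  have "ea_perp A (g {}) (g {1..n})"
    using hom_boolD3[OF h, of "{}" "{1..n}"] by simp
  moreover have "g {} \<in> ea_carrier A" using hom_boolD1[OF h] by simp
  ultimately show ?thesis using ea_E4[OF EA] hom_boolD2[OF h] by metis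
qed

lemma hom_compl: assumes h: "ea_hom (bool_ea n) A g" and x: "x \<subseteq> {1..n}"
  shows "g ({1..n} - x) = cp A (g x)"
proof -
  have u: "x \<union> ({1..n} - x) = {1..n}" using x by auto
  have d: "x \<inter> ({1..n} - x) = {}" by auto
  have hh: "ea_perp A (g x) (g ({1..n} - x)) \<and> g (x \<union> ({1..n} - x)) = ea_plus A (g x) (g ({1..n} - x))"
    using hom_boolD3[OF h x _ d] by simp
  have cc: "g x \<in> ea_carrier A" "g ({1..n} - x) \<in> ea_carrier A" "g {1..n} = ea_one A"
    using hom_boolD1[OF h x] hom_boolD1[OF h, of "{1..n} - x"] hom_boolD2[OF h] by auto
  have "ea_plus A (g x) (g ({1..n} - x)) = ea_one A" using hh cc(3) unfolding u by simp
  thus ?thesis using cp_unique[OF EA cc(1) cc(2)] hh by blast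
qed

definition g2 :: "'a \<Rightarrow> nat set \<Rightarrow> 'a" where
  "g2 a y = (if 1 \<in> y then (if 2 \<in> y then ea_one A else a)
             else (if 2 \<in> y then cp A a else ea_zero A))"

lemma g2_case:
  assumes a: "a \<in> ea_carrier A" and xy: "1 \<in> x \<Longrightarrow> 1 \<notin> y" "2 \<in> x \<Longrightarrow> 2 \<notin> y"
  and c: "cp A a \<in> ea_carrier A" "ea_perp A a (cp A a)" "ea_plus A a (cp A a) = ea_one A"
  and c2: "ea_perp A (cp A a) a" "ea_plus A (cp A a) a = ea_one A"
  and zs: "\<And>v. v \<in> ea_carrier A \<Longrightarrow> ea_perp A (ea_zero A) v"
     "\<And>v. v \<in> ea_carrier A \<Longrightarrow> ea_plus A (ea_zero A) v = v"
     "\<And>v. v \<in> ea_carrier A \<Longrightarrow> ea_perp A v (ea_zero A)"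
     "\<And>v. v \<in> ea_carrier A \<Longrightarrow> ea_plus A v (ea_zero A) = v"
  shows "ea_perp A (g2 a x) (g2 a y) \<and> g2 a (x \<union> y) = ea_plus A (g2 a x) (g2 a y)"
  by (cases "1 \<in> x"; cases "1 \<in> y"; cases "2 \<in> x"; cases "2 \<in> y";
      simp add: g2_def a c c2 zs xy xy[unfolded One_nat_def] ea_zero_in[OF EA] ea_one_in[OF EA])

lemma g2_hom: assumes a: "a \<in> ea_carrier A" shows "ea_hom (bool_ea 2) A (g2 a)"
proof -
  have c: "cp A a \<in> ea_carrier A" "ea_perp A a (cp A a)" "ea_plus A a (cp A a) = ea_one A"
    using cp_props[OF EA a] by auto
  have c2: "ea_perp A (cp A a) a" "ea_plus A (cp A a) a = ea_one A"
    using ea_comm[OF EA a c(1) c(2)] c by auto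
  have zs: "ea_perp A (ea_zero A) v" "ea_plus A (ea_zero A) v = v"
     "ea_perp A v (ea_zero A)" "ea_plus A v (ea_zero A) = v"
     if "v \<in> ea_carrier A" for v using zero_left[OF EA that] zero_right[OF EA that] by auto
  have p3: "\<forall>x y. x \<subseteq> {1..2} \<longrightarrow> y \<subseteq> {1..2} \<longrightarrow> x \<inter> y = {} \<longrightarrow>
       ea_perp A (g2 a x) (g2 a y) \<and> g2 a (x \<union> y) = ea_plus A (g2 a x) (g2 a y)"
  proof (intro allI impI)
    fix x y :: "nat set" assume xy: "x \<inter> y = {}"
    have "1 \<in> x \<Longrightarrow> 1 \<notin> y" "2 \<in> x \<Longrightarrow> 2 \<notin> y" using xy by auto
    then show "ea_perp A (g2 a x) (g2 a y) \<and> g2 a (x \<union> y) = ea_plus A (g2 a x) (g2 a y)"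
      by (rule g2_case[OF a _ _ c c2 zs])
  qed
  have p1: "\<forall>x. x \<subseteq> {1..2} \<longrightarrow> g2 a x \<in> ea_carrier A"
    by (auto simp: g2_def a c ea_zero_in[OF EA] ea_one_in[OF EA])
  have p2: "g2 a {1..2} = ea_one A" by (simp add: g2_def)
  show ?thesis unfolding hom_bool_iff by (intro conjI p1 p2 p3)
qed

definition g3 :: "'a \<Rightarrow> 'a \<Rightarrow> nat set \<Rightarrow> 'a" where
  "g3 a b y = (if 1 \<in> y then (if 2 \<in> y then (if 3 \<in> y then ea_one A else ea_plus A a b)
                               else (if 3 \<in> y then ea_plus A a (cp A (ea_plus A a b)) else a))
               else (if 2 \<in> y then (if 3 \<in> y then ea_plus A b (cp A (ea_plus A a b)) else b)
                               else (if 3 \<in> y then cp A (ea_plus A a b) else ea_zero A)))"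

lemma g3_hom: assumes a: "a \<in> ea_carrier A" and b: "b \<in> ea_carrier A" and ab0: "ea_perp A a b"
  shows "ea_hom (bool_ea 3) A (g3 a b)"
proof -
  define ab where "ab = ea_plus A a b"
  define c where "c = cp A ab"
  have ab: "ab \<in> ea_carrier A" unfolding ab_def using ea_closed[OF EA a b ab0] .
  have c: "c \<in> ea_carrier A" "ea_perp A ab c" "ea_plus A ab c = ea_one A"
    unfolding c_def using cp_props[OF EA ab] by auto
  have c1: "ea_perp A c ab" "ea_plus A c ab = ea_one A" using ea_comm[OF EA ab c(1) c(2)] c by auto
  have as1: "ea_perp A b c" "ea_perp A a (ea_plus A b c)" "ea_plus A a (ea_plus A b c) = ea_one A"
    using ea_assoc[OF EA a b c(1) ab0] c unfolding ab_def by auto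
  have bc: "ea_plus A b c \<in> ea_carrier A" using ea_closed[OF EA b c(1) as1(1)] .
  have c2: "ea_perp A (ea_plus A b c) a" "ea_plus A (ea_plus A b c) a = ea_one A"
    using ea_comm[OF EA a bc as1(2)] as1 by auto
  have ba: "ea_perp A b a" "ea_plus A b a = ab" using ea_comm[OF EA a b ab0] unfolding ab_def by auto
  have as2: "ea_perp A a c" "ea_perp A b (ea_plus A a c)" "ea_plus A b (ea_plus A a c) = ea_one A"
    using ea_assoc[OF EA b a c(1) ba(1)] c ba(2) by auto
  have ac: "ea_plus A a c \<in> ea_carrier A" using ea_closed[OF EA a c(1) as2(1)] .
  have c3: "ea_perp A (ea_plus A a c) b" "ea_plus A (ea_plus A a c) b = ea_one A"
    using ea_comm[OF EA b ac as2(2)] as2 by auto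
  have c4: "ea_perp A c a" "ea_plus A c a = ea_plus A a c" using ea_comm[OF EA a c(1) as2(1)] by auto
  have c5: "ea_perp A c b" "ea_plus A c b = ea_plus A b c" using ea_comm[OF EA b c(1) as1(1)] by auto
  have zs: "ea_perp A (ea_zero A) v" "ea_plus A (ea_zero A) v = v"
     "ea_perp A v (ea_zero A)" "ea_plus A v (ea_zero A) = v"
     if "v \<in> ea_carrier A" for v using zero_left[OF EA that] zero_right[OF EA that] by auto
  have g3e: "g3 a b y = (if 1 \<in> y then (if 2 \<in> y then (if 3 \<in> y then ea_one A else ab)
                               else (if 3 \<in> y then ea_plus A a c else a))
               else (if 2 \<in> y then (if 3 \<in> y then ea_plus A b c else b)
                               else (if 3 \<in> y then c else ea_zero A)))" for y
    unfolding g3_def ab_def c_def by simp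
  have p3: "\<forall>x y. x \<subseteq> {1..3} \<longrightarrow> y \<subseteq> {1..3} \<longrightarrow> x \<inter> y = {} \<longrightarrow>
       ea_perp A (g3 a b x) (g3 a b y) \<and> g3 a b (x \<union> y) = ea_plus A (g3 a b x) (g3 a b y)"
  proof (intro allI impI)
    fix x y :: "nat set" assume xy: "x \<inter> y = {}"
    have xy1: "1 \<in> x \<Longrightarrow> 1 \<notin> y" "2 \<in> x \<Longrightarrow> 2 \<notin> y" "3 \<in> x \<Longrightarrow> 3 \<notin> y" using xy by auto
    show "ea_perp A (g3 a b x) (g3 a b y) \<and> g3 a b (x \<union> y) = ea_plus A (g3 a b x) (g3 a b y)"
      unfolding g3e
      by (cases "1 \<in> x"; cases "1 \<in> y"; cases "2 \<in> x"; cases "2 \<in> y"; cases "3 \<in> x"; cases "3 \<in> y";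
        simp add: xy1 xy1[unfolded One_nat_def] ab0 ab_def[symmetric] a b ab c c1 as1 bc c2 ba as2 ac c3 c4 c5 zs
           ea_zero_in[OF EA] ea_one_in[OF EA])
  qed
  have p1: "\<forall>x. x \<subseteq> {1..3} \<longrightarrow> g3 a b x \<in> ea_carrier A"
    unfolding g3e by (simp add: a b ab c bc ac ea_zero_in[OF EA] ea_one_in[OF EA])
  have p2: "g3 a b {1..3} = ea_one A" by (simp add: g3e)
  show ?thesis unfolding hom_bool_iff by (intro conjI p1 p2 p3)
qed

lemma g3_vals: "g3 a b {1} = a" "g3 a b {2} = b" "g3 a b {1,2} = ea_plus A a b"
  by (simp_all add: g3_def)

end

definition fx :: "nat \<Rightarrow> nat set \<Rightarrow> nat set \<Rightarrow> nat set" where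
  "fx n x y = {i \<in> {1..n}. if i \<in> x then 1 \<in> y else 2 \<in> y}"

lemma fx_bool: "bool_hom 2 n (fx n x)"
  unfolding bool_hom_def fx_def by auto

lemma fx_vals: assumes "x \<subseteq> {1..n}"
  shows "fx n x y = (if 1 \<in> y then (if 2 \<in> y then {1..n} else x) else (if 2 \<in> y then {1..n} - x else {}))"
  using assms unfolding fx_def by auto

context
  fixes A :: "'a eff_alg"
  assumes EA: "effect_algebra A"
begin

lemma elem_arr_fx: assumes g: "elem_obj A n g" and x: "x \<subseteq> {1..n}"
  shows "elem_arr A 2 (g2 A (g x)) n g (fx n x)"
proof -
  have h: "ea_hom (bool_ea n) A g" using g unfolding elem_obj_def .
  have gx: "g x \<in> ea_carrier A" using hom_boolD1[OF h x] .
  have "g (fx n x y) = g2 A (g x) y" for y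
    unfolding fx_vals[OF x] g2_def[OF EA]
    using hom_empty[OF EA h] hom_compl[OF EA h x] hom_boolD2[OF h] by simp
  thus ?thesis unfolding elem_arr_def elem_obj_def using g2_hom[OF EA gx] h fx_bool by simp
qed

end

theorem mainTheorem1:
  fixes A :: "'a eff_alg"
  assumes "effect_algebra A"
  shows "colimiting_DA A A (\<lambda>n g. g) TYPE('b)"
proof -
  note EA = assms
  have cc: "cocone_DA A A (\<lambda>n g. g)"
    unfolding cocone_DA_def elem_arr_def elem_obj_def by blast
  have univ: "\<exists>u. ea_hom A B u \<and> mediates A (\<lambda>n g. g) h u \<and>
             (\<forall>v. ea_hom A B v \<and> mediates A (\<lambda>n g. g) h v \<longrightarrow> (\<forall>c\<in>ea_carrier A. v c = u c))"
    if B: "effect_algebra B" and h: "cocone_DA A B h" for B :: "'b eff_alg" and h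
  proof -
    have hobj: "ea_hom (bool_ea n) B (h n g)" if "elem_obj A n g" for n g
      using h that unfolding cocone_DA_def by blast
    have harr: "h n' g' (f x) = h n g x" if "elem_arr A n g n' g' f" "x \<in> Pow {1..n}" for n g n' g' f x
      using h that unfolding cocone_DA_def by blast
    define u where "u a = h 2 (g2 A a) {1}" for a
    have o2: "elem_obj A 2 (g2 A a)" if "a \<in> ea_carrier A" for a
      unfolding elem_obj_def using g2_hom[OF EA that] .
    have M: "u (g x) = h n g x" if g: "elem_obj A n g" and x: "x \<subseteq> {1..n}" for n g x
    proof -
      have "h n g (fx n x {1}) = h 2 (g2 A (g x)) {1}"
        using harr[OF elem_arr_fx[OF EA g x], of "{1}"] by simp
      moreover have "fx n x {1} = x" using fx_vals[OF x] by simp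
      ultimately show ?thesis unfolding u_def by simp
    qed
    have med: "mediates A (\<lambda>n g. g) h u" unfolding mediates_def using M by blast
    have H1: "\<forall>a\<in>ea_carrier A. u a \<in> ea_carrier B"
    proof
      fix a assume a: "a \<in> ea_carrier A"
      show "u a \<in> ea_carrier B" unfolding u_def using hom_boolD1[OF hobj[OF o2[OF a]], of "{1}"] by simp
    qed
    have H2: "u (ea_one A) = ea_one B"
    proof -
      have "u (g2 A (ea_one A) {1..2}) = h 2 (g2 A (ea_one A)) {1..2}"
        using M[OF o2[OF ea_one_in[OF EA]], of "{1..2}"] by simp
      moreover have "g2 A (ea_one A) {1..2} = ea_one A" by (simp add: g2_def[OF EA])
      ultimately show "u (ea_one A) = ea_one B"
        using hom_boolD2[OF hobj[OF o2[OF ea_one_in[OF EA]]]] by simp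
    qed
    have H3: "\<forall>a\<in>ea_carrier A. \<forall>b\<in>ea_carrier A. ea_perp A a b \<longrightarrow>
        ea_perp B (u a) (u b) \<and> u (ea_plus A a b) = ea_plus B (u a) (u b)"
    proof (intro ballI impI)
      fix a b assume a: "a \<in> ea_carrier A" and b: "b \<in> ea_carrier A" and ab: "ea_perp A a b"
      have o3: "elem_obj A 3 (g3 A a b)" unfolding elem_obj_def using g3_hom[OF EA a b ab] .
      have e1: "u a = h 3 (g3 A a b) {1}" using M[OF o3, of "{1}"] g3_vals[OF EA, of a b] by simp
      have e2: "u b = h 3 (g3 A a b) {2}" using M[OF o3, of "{2}"] g3_vals[OF EA, of a b] by simp
      have e3: "u (ea_plus A a b) = h 3 (g3 A a b) {1,2}" using M[OF o3, of "{1,2}"] g3_vals[OF EA, of a b] by simp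
      have "ea_perp B (h 3 (g3 A a b) {1}) (h 3 (g3 A a b) {2}) \<and>
            h 3 (g3 A a b) ({1} \<union> {2}) = ea_plus B (h 3 (g3 A a b) {1}) (h 3 (g3 A a b) {2})"
        using hom_boolD3[OF hobj[OF o3], of "{1}" "{2}"] by simp
      then show "ea_perp B (u a) (u b) \<and> u (ea_plus A a b) = ea_plus B (u a) (u b)"
        using e1 e2 e3 by (simp add: insert_commute)
    qed
    have hom: "ea_hom A B u" unfolding ea_hom_def using H1 H2 H3 by blast
    have uniq: "\<forall>v. ea_hom A B v \<and> mediates A (\<lambda>n g. g) h v \<longrightarrow> (\<forall>c\<in>ea_carrier A. v c = u c)"
    proof (intro allI impI ballI)
      fix v c assume v: "ea_hom A B v \<and> mediates A (\<lambda>n g. g) h v" and c: "c \<in> ea_carrier A"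
      have "v (g2 A c {1}) = h 2 (g2 A c) {1}"
        using v o2[OF c] unfolding mediates_def by simp
      moreover have "g2 A c {1} = c" by (simp add: g2_def[OF EA])
      ultimately show "v c = u c" unfolding u_def by simp
    qed
    show ?thesis using hom med uniq by blast
  qed
  show ?thesis unfolding colimiting_DA_def using cc univ by blast
qed

end
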